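(* Let $\mathcal{X}=\{x\in\mathbb{R}^d:\|x\|_2\le r\}$, $\mathcal{Y}=\{-1,+1\}$, $\mathcal{Z}=\mathcal{X}\times\mathcal{Y}$ with metric $d_\mathcal{Z}((x,y),(x',y'))=\|x-x'\|_2+\mathbb{1}_{(y\ne y')}$, and $\mathcal{F}=\{(x,y)\mapsto\max\{0,1-y\,w\cdot x\}:\|w\|_2\le\Lambda\}$. Let $\mathcal{B}\subseteq\mathbb{R}^d$ be nonempty, closed, convex, origin-symmetric, $N(x)=\{x'\in\mathcal{X}:x'-x\in\mathcal{B}\}$ (nonempty), $\epsilon_\mathcal{B}=\sup_{v\in\mathcal{B}}\|v\|_2$. Let $z_i=(x_i,y_i)$, $i=1,\dots,n$, be i.i.d. from a distribution $P$ on $\mathcal{Z}$, with empirical distribution $P_n$. Then for any $f\in\mathcal{F}$ (with weight vector $w$) and $\delta\in(0,1)$, with probability at least $1-\delta$, $$R_P(f,\mathcal{B})\le\frac1n\sum_{i=1}^nf(z_i)+\lambda^+_{f,P_n}\epsilon_\mathcal{B}+\frac{144}{\sqrt n}\Lambda r\sqrt d+\frac{12\sqrt\pi}{\sqrt n}\Lambda_{\epsilon_\mathcal{B}}(2r+1)+(1+\Lambda r)\sqrt{\frac{\log(1/\delta)}{2n}},$$ where $\lambda^+_{f,P_n}\le\max_i\{2y_i\,w\cdot x_i,\|w\|_2\}$.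
   Context: $R_P(f,\mathcal{B}):=\mathbb{E}_{(x,y)\sim P}[\max_{x'\in N(x)}f(x',y)]$. Set $M=1+\Lambda r$. For an empirical distribution $Q_n$ on $\mathcal{Z}$ and $f\in\mathcal{F}$: $\psi_{f,Q_n}(\lambda):=\mathbb{E}_{z\sim Q_n}\big(\sup_{z'\in\mathcal{Z}}\{f(z')-\lambda d_\mathcal{Z}(z,z')-f(z)\}\big)$; $\lambda^+_{f,Q_n}:=\inf\{\lambda:\psi_{f,Q_n}(\lambda)=0\}$; $\lambda^-_{f,Q_n}:=\sup\{\lambda:\psi_{f,Q_n}(\lambda)=\lambda^+_{f,Q_n}\epsilon_\mathcal{B}\}$ if nonempty, else $0$. Let $[\zeta^-_{f,Q_n},\zeta^+_{f,Q_n}]:=[0,M/\epsilon_\mathcal{B}]$ if $\epsilon_\mathcal{B}\ge M/\lambda^+_{f,Q_n}$, else $[\lambda^-_{f,Q_n},\lambda^+_{f,Q_n}]$ ($M/0=+\infty$); $\zeta^-,\zeta^+$ are the infimum of left endpoints and supremum of right endpoints over all $f\in\mathcal{F}$ and all empirical distributions $Q_n$; $\Lambda_{\epsilon_\mathcal{B}}:=\zeta^+-\zeta^-$. *)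

theory Defs
  imports "HOL-Probability.Probability"
begin

definition Zset :: "real \<Rightarrow> ((real^'n) \<times> real) set" where
  "Zset r = cball 0 r \<times> {-1, 1}"

definition dZ :: "((real^'n) \<times> real) \<Rightarrow> ((real^'n) \<times> real) \<Rightarrow> real" where
  "dZ z z' = norm (fst z - fst z') + (if snd z \<noteq> snd z' then 1 else 0)"

definition hinge :: "real^'n \<Rightarrow> (real^'n) \<times> real \<Rightarrow> real" where
  "hinge w z = max 0 (1 - snd z * (w \<bullet> fst z))"

definition Nbhd :: "real \<Rightarrow> (real^'n) set \<Rightarrow> real^'n \<Rightarrow> (real^'n) set" where
  "Nbhd r B x = {x' \<in> cball 0 r. x' - x \<in> B}"

definition epsB :: "(real^'n) set \<Rightarrow> real" where
  "epsB B = (SUP v\<in>B. norm v)"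

definition adv_risk :: "((real^'n) \<times> real) measure \<Rightarrow> real \<Rightarrow> (real^'n) set \<Rightarrow> real^'n \<Rightarrow> real" where
  "adv_risk P r B w = (\<integral>z. (SUP x'\<in>Nbhd r B (fst z). hinge w (x', snd z)) \<partial>P)"

definition emp_mean :: "nat \<Rightarrow> (nat \<Rightarrow> 'z) \<Rightarrow> ('z \<Rightarrow> real) \<Rightarrow> real" where
  "emp_mean n zs g = (\<Sum>i<n. g (zs i)) / real n"

definition psi :: "real \<Rightarrow> real^'n \<Rightarrow> nat \<Rightarrow> (nat \<Rightarrow> (real^'n) \<times> real) \<Rightarrow> real \<Rightarrow> real" where
  "psi r w n zs lam = emp_mean n zs
     (\<lambda>z. (SUP z'\<in>Zset r. hinge w z' - lam * dZ z z' - hinge w z))"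

definition lam_plus :: "real \<Rightarrow> real^'n \<Rightarrow> nat \<Rightarrow> (nat \<Rightarrow> (real^'n) \<times> real) \<Rightarrow> real" where
  "lam_plus r w n zs = Inf {lam. 0 \<le> lam \<and> psi r w n zs lam = 0}"

definition lam_minus :: "real \<Rightarrow> (real^'n) set \<Rightarrow> real^'n \<Rightarrow> nat \<Rightarrow> (nat \<Rightarrow> (real^'n) \<times> real) \<Rightarrow> real" where
  "lam_minus r B w n zs =
     (let S = {lam. 0 \<le> lam \<and> lam \<le> lam_plus r w n zs \<and>
                    psi r w n zs lam = lam_plus r w n zs * epsB B}
      in if S = {} then 0 else Sup S)"

text \<open>Endpoints of the interval [zeta^-, zeta^+] for one f and one empirical distribution,
  with M = 1 + Lambda r; the condition eps_B >= M / lambda^+ is false when lambda^+ = 0.\<close>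
definition zeta_lo :: "real \<Rightarrow> real \<Rightarrow> (real^'n) set \<Rightarrow> real^'n \<Rightarrow> nat \<Rightarrow> (nat \<Rightarrow> (real^'n) \<times> real) \<Rightarrow> real" where
  "zeta_lo r Lam B w n zs =
     (if 0 < lam_plus r w n zs \<and> (1 + Lam * r) / lam_plus r w n zs \<le> epsB B then 0
      else lam_minus r B w n zs)"

definition zeta_hi :: "real \<Rightarrow> real \<Rightarrow> (real^'n) set \<Rightarrow> real^'n \<Rightarrow> nat \<Rightarrow> (nat \<Rightarrow> (real^'n) \<times> real) \<Rightarrow> real" where
  "zeta_hi r Lam B w n zs =
     (if 0 < lam_plus r w n zs \<and> (1 + Lam * r) / lam_plus r w n zs \<le> epsB B
      then (1 + Lam * r) / epsB B
      else lam_plus r w n zs)"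

definition Lambda_eps :: "real \<Rightarrow> real \<Rightarrow> (real^'n) set \<Rightarrow> nat \<Rightarrow> real" where
  "Lambda_eps r Lam B n =
     (SUP p\<in>{(w, zs). norm (w::real^'n) \<le> Lam \<and> (\<forall>i<n. zs i \<in> Zset r)}.
        zeta_hi r Lam B (fst p) n (snd p))
   - (INF p\<in>{(w, zs). norm (w::real^'n) \<le> Lam \<and> (\<forall>i<n. zs i \<in> Zset r)}.
        zeta_lo r Lam B (fst p) n (snd p))"

end

theory Submission
  imports Defs
begin


definition SS :: "real \<Rightarrow> real^'n \<Rightarrow> real \<Rightarrow> (real^'n) \<times> real \<Rightarrow> real" where
  "SS r w lam z = (SUP z'\<in>Zset r. hinge w z' - lam * dZ z z')"

lemma Zset_ne: "0 < r \<Longrightarrow> (0, 1) \<in> Zset r"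
  by (auto simp: Zset_def)

lemma dZ_self[simp]: "dZ z z = 0" by (simp add: dZ_def)
lemma dZ_nonneg: "0 \<le> dZ z z'" by (simp add: dZ_def)
lemma dZ_le: "z \<in> Zset r \<Longrightarrow> z' \<in> Zset r \<Longrightarrow> dZ z z' \<le> 2 * r + 1"
proof -
  assume a: "z \<in> Zset r" "z' \<in> Zset r"
  have "norm (fst z - fst z') \<le> norm (fst z) + norm (fst z')" by (rule norm_triangle_ineq4)
  also have "\<dots> \<le> r + r" using a by (intro add_mono) (auto simp: Zset_def)
  finally show ?thesis unfolding dZ_def by auto
qed

lemma hinge_bounds:
  fixes w :: "real^'n"
  assumes "z \<in> Zset r" "norm w \<le> Lam" "0 < r"
  shows "max 0 (1 - Lam * r) \<le> hinge w z" "hinge w z \<le> 1 + Lam * r"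
    "\<bar>snd z * (w \<bullet> fst z)\<bar> \<le> Lam * r"
proof -
  obtain x y where z: "z = (x,y)" by (cases z)
  have x: "norm x \<le> r" and y: "y = -1 \<or> y = 1" using assms(1) by (auto simp: Zset_def z)
  have "\<bar>w \<bullet> x\<bar> \<le> norm w * norm x" by (rule Cauchy_Schwarz_ineq2)
  also have "\<dots> \<le> Lam * r"
  proof -
    have "0 \<le> Lam" using assms(2) norm_ge_zero[of w] by linarith
    then show ?thesis using x assms(2) norm_ge_zero[of x] by (intro mult_mono) auto
  qed
  finally have t: "\<bar>y * (w \<bullet> x)\<bar> \<le> Lam * r" using y by auto
  then show "\<bar>snd z * (w \<bullet> fst z)\<bar> \<le> Lam * r" by (simp add: z)
  show "max 0 (1 - Lam * r) \<le> hinge w z" "hinge w z \<le> 1 + Lam * r"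
    using t unfolding hinge_def z by (auto simp: abs_le_iff)
qed

context
  fixes r Lam :: real and w :: "real^'n"
  assumes r: "0 < r" and Lam: "0 < Lam" and w: "norm w \<le> Lam"
begin

lemma term_le_hi: "z' \<in> Zset r \<Longrightarrow> 0 \<le> lam \<Longrightarrow> hinge w z' - lam * dZ z z' \<le> 1 + Lam * r"
  using hinge_bounds(2)[OF _ w r, of z'] mult_nonneg_nonneg[OF _ dZ_nonneg, of lam z z'] by linarith

lemma bdd_SS: "0 \<le> lam \<Longrightarrow> bdd_above ((\<lambda>z'. hinge w z' - lam * dZ z z') ` Zset r)"
  by (rule bdd_aboveI[of _ "1 + Lam * r"]) (auto intro: term_le_hi)

lemma SS_le_hi: "0 \<le> lam \<Longrightarrow> SS r w lam z \<le> 1 + Lam * r"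
  unfolding SS_def
  by (rule cSUP_least) (use Zset_ne[OF r] term_le_hi in auto)

lemma SS_ge: "0 \<le> lam \<Longrightarrow> z' \<in> Zset r \<Longrightarrow> hinge w z' - lam * dZ z z' \<le> SS r w lam z"
  unfolding SS_def by (rule cSUP_upper[OF _ bdd_SS])

lemma SS_ge_hinge: "0 \<le> lam \<Longrightarrow> z \<in> Zset r \<Longrightarrow> hinge w z \<le> SS r w lam z"
  using SS_ge[of lam z z] by simp

lemma SS_mono: "0 \<le> lam \<Longrightarrow> lam \<le> lam' \<Longrightarrow> SS r w lam' z \<le> SS r w lam z"
  unfolding SS_def[of r w lam']
proof (rule cSUP_least)
  show "Zset r \<noteq> {}" using Zset_ne[OF r] by auto
  fix z' :: "(real^'n) \<times> real" assume "0 \<le> lam" "lam \<le> lam'" "z' \<in> Zset r"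
  then have "hinge w z' - lam' * dZ z z' \<le> hinge w z' - lam * dZ z z'"
    using dZ_nonneg[of z z'] by (intro diff_left_mono mult_right_mono) auto
  also have "\<dots> \<le> SS r w lam z" using SS_ge \<open>0 \<le> lam\<close> \<open>z' \<in> Zset r\<close> by blast
  finally show "hinge w z' - lam' * dZ z z' \<le> SS r w lam z" .
qed

lemma SS_lip_lam: "z \<in> Zset r \<Longrightarrow> 0 \<le> lam \<Longrightarrow> lam \<le> lam' \<Longrightarrow>
    SS r w lam z \<le> SS r w lam' z + (lam' - lam) * (2 * r + 1)"
  unfolding SS_def[of r w lam]
proof (rule cSUP_least)
  show "Zset r \<noteq> {}" using Zset_ne[OF r] by auto
  fix z' :: "(real^'n) \<times> real" assume a: "z \<in> Zset r" "0 \<le> lam" "lam \<le> lam'" "z' \<in> Zset r"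
  have "hinge w z' - lam * dZ z z' = (hinge w z' - lam' * dZ z z') + (lam' - lam) * dZ z z'"
    by (simp add: algebra_simps)
  also have "\<dots> \<le> SS r w lam' z + (lam' - lam) * (2 * r + 1)"
    using a by (intro add_mono SS_ge mult_left_mono dZ_le) auto
  finally show "hinge w z' - lam * dZ z z' \<le> SS r w lam' z + (lam' - lam) * (2 * r + 1)" .
qed

lemma SS_lip_x: "0 \<le> lam \<Longrightarrow> SS r w lam (x1, y) \<le> SS r w lam (x2, y) + lam * dist x1 x2"
  unfolding SS_def[of r w lam "(x1,y)"]
proof (rule cSUP_least)
  show "Zset r \<noteq> {}" using Zset_ne[OF r] by auto
  fix z' :: "(real^'n) \<times> real" assume a: "0 \<le> lam" "z' \<in> Zset r"
  have "dZ (x2, y) z' \<le> dZ (x1, y) z' + dist x1 x2"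
    unfolding dZ_def dist_norm using norm_triangle_ineq[of "x2 - x1" "x1 - fst z'"]
    by (simp add: norm_minus_commute algebra_simps)
  then have "hinge w z' - lam * dZ (x1, y) z' \<le> hinge w z' - lam * dZ (x2, y) z' + lam * dist x1 x2"
  proof -
    have "lam * dZ (x2, y) z' \<le> lam * (dZ (x1, y) z' + dist x1 x2)"
      using a \<open>dZ (x2, y) z' \<le> dZ (x1, y) z' + dist x1 x2\<close> by (intro mult_left_mono) auto
    then show ?thesis by (simp add: distrib_left)
  qed
  also have "\<dots> \<le> SS r w lam (x2, y) + lam * dist x1 x2"
    using a by (intro add_mono SS_ge) auto
  finally show "hinge w z' - lam * dZ (x1, y) z' \<le> SS r w lam (x2, y) + lam * dist x1 x2" .
qed

lemma SS_cont: "0 \<le> lam \<Longrightarrow> continuous_on UNIV (\<lambda>x. SS r w lam (x, y))"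
proof (rule lipschitz_on_continuous_on[of lam])
  assume "0 \<le> lam"
  show "lam-lipschitz_on UNIV (\<lambda>x. SS r w lam (x, y))"
  proof (rule lipschitz_onI)
    fix x1 x2 :: "real^'n"
    show "dist (SS r w lam (x1, y)) (SS r w lam (x2, y)) \<le> lam * dist x1 x2"
      using SS_lip_x[OF \<open>0 \<le> lam\<close>, of x1 y x2] SS_lip_x[OF \<open>0 \<le> lam\<close>, of x2 y x1]
      by (simp add: dist_real_def dist_commute abs_le_iff)
  qed fact
qed

definition lab :: "real \<Rightarrow> real" where
  "lab y = (if y = 1 then 1 else if y = -1 then -1 else 0)"

lemma SS_lab: "SS r w lam (x, y) = SS r w lam (x, lab y)"
proof -
  have l: "(y \<noteq> y') = (lab y \<noteq> y')" if "y' = -1 \<or> y' = 1" for y'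
    using that unfolding lab_def by auto
  have "dZ (x, y) z' = dZ (x, lab y) z'" if "z' \<in> Zset r" for z'
  proof -
    have "snd z' = -1 \<or> snd z' = 1" using that by (auto simp: Zset_def)
    then show ?thesis unfolding dZ_def using l[of "snd z'"] by simp
  qed
  then show ?thesis unfolding SS_def by (intro SUP_cong refl) simp
qed

lemma SS_measurable: "0 \<le> lam \<Longrightarrow> SS r w lam \<in> borel_measurable borel"
proof -
  assume l: "0 \<le> lam"
  have eq: "SS r w lam = (\<lambda>z. if snd z = 1 then SS r w lam (fst z, 1) else
      if snd z = -1 then SS r w lam (fst z, -1) else SS r w lam (fst z, 0))"
  proof (rule ext)
    fix z :: "(real^'n) \<times> real"
    obtain x y where z: "z = (x, y)" by (cases z)
    have h: "SS r w lam (x, y) = SS r w lam (x, lab y)" by (rule SS_lab)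
    show "SS r w lam z = (if snd z = 1 then SS r w lam (fst z, 1) else
      if snd z = -1 then SS r w lam (fst z, -1) else SS r w lam (fst z, 0))"
    proof (cases "y = 1")
      case True then show ?thesis by (simp add: z)
    next
      case f1: False
      show ?thesis
      proof (cases "y = -1")
        case True then show ?thesis by (simp add: z)
      next
        case False
        have h0: "lab y = 0" using False f1 by (simp add: lab_def)
        have "SS r w lam z = SS r w lam (fst z, lab y)" using h z by simp
        then have "SS r w lam z = SS r w lam (fst z, 0)" using h0 by simp
        then show ?thesis using False f1 z by simp
      qed
    qed
  qed
  have c: "continuous_on UNIV (\<lambda>z::(real^'n)\<times>real. SS r w lam (fst z, c))" for c
    by (rule continuous_on_compose2[OF SS_cont[OF l] continuous_on_fst[OF continuous_on_id]]) auto
  have m: "(\<lambda>z::(real^'n)\<times>real. SS r w lam (fst z, c)) \<in> borel_measurable borel" for c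
    by (rule borel_measurable_continuous_onI[OF c])
  have s: "{z::(real^'n)\<times>real. snd z = c} \<in> sets borel" for c
  proof -
    have e: "{z::(real^'n)\<times>real. snd z = c} = UNIV \<times> {c}" by auto
    have "closed {z::(real^'n)\<times>real. snd z = c}"
      unfolding e by (rule closed_Times[OF closed_UNIV closed_singleton])
    then show ?thesis by (rule borel_closed)
  qed
  have s': "{z \<in> space borel. snd z = c} \<in> sets (borel :: ((real^'n)\<times>real) measure)" for c
    using s[of c] by simp
  have "(\<lambda>z::(real^'n)\<times>real. if snd z = 1 then SS r w lam (fst z, 1) else
      if snd z = -1 then SS r w lam (fst z, -1) else SS r w lam (fst z, 0)) \<in> borel_measurable borel"
  proof (rule measurable_If[where P="\<lambda>z. snd z = 1"])
    show "(\<lambda>z::(real^'n)\<times>real. if snd z = - 1 then SS r w lam (fst z, - 1) else SS r w lam (fst z, 0)) \<in> borel_measurable borel"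
      apply (rule measurable_If)
        apply (rule m)
       apply (rule m)
      apply (rule s')
      done
  qed (rule m[of 1], rule s'[of 1])
  then show ?thesis using eq by simp
qed

end



lemma hinge_x_lip:
  fixes w x x' :: "real^'n"
  assumes "y' = -1 \<or> y' = 1"
  shows "hinge w (x', y') \<le> hinge w (x, y') + norm w * norm (x - x')"
proof -
  have "y' * (w \<bullet> x) - y' * (w \<bullet> x') = y' * (w \<bullet> (x - x'))" by (simp add: inner_diff_right algebra_simps)
  also have "\<dots> \<le> \<bar>w \<bullet> (x - x')\<bar>" using assms by auto
  also have "\<dots> \<le> norm w * norm (x - x')" by (rule Cauchy_Schwarz_ineq2)
  finally have "y' * (w \<bullet> x) - y' * (w \<bullet> x') \<le> norm w * norm (x - x')" .
  then show ?thesis unfolding hinge_def by (simp add: max_def)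
qed

lemma hinge_y_diff:
  fixes w x :: "real^'n"
  assumes "y' = -1 \<or> y' = 1" "y = -1 \<or> y = 1" "2 * y * (w \<bullet> x) \<le> lam" "0 \<le> lam"
  shows "hinge w (x, y') \<le> hinge w (x, y) + (if y \<noteq> y' then lam else 0)"
  using assms unfolding hinge_def by (auto simp: max_def)

definition good :: "real \<Rightarrow> real^'n \<Rightarrow> nat \<Rightarrow> (nat \<Rightarrow> (real^'n) \<times> real) \<Rightarrow> real \<Rightarrow> bool" where
  "good r w n zs lam \<longleftrightarrow> (\<forall>i<n. SS r w lam (zs i) = hinge w (zs i))"

definition lmax :: "real \<Rightarrow> real \<Rightarrow> real" where "lmax r Lam = max (2 * Lam * r) Lam"

context
  fixes r Lam :: real and w :: "real^'n"
  assumes r: "0 < r" and Lam: "0 < Lam" and w: "norm w \<le> Lam"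
begin

lemma SS_eq_hinge:
  assumes z: "(x, y) \<in> Zset r" and l1: "norm w \<le> lam" and l2: "2 * y * (w \<bullet> x) \<le> lam"
  shows "SS r w lam (x, y) = hinge w (x, y)"
proof (rule antisym)
  have l0: "0 \<le> lam" using l1 norm_ge_zero[of w] by linarith
  show "hinge w (x, y) \<le> SS r w lam (x, y)" by (rule SS_ge_hinge[OF r Lam w l0 z])
  have y: "y = -1 \<or> y = 1" using z by (auto simp: Zset_def)
  show "SS r w lam (x, y) \<le> hinge w (x, y)"
    unfolding SS_def
  proof (rule cSUP_least)
    show "Zset r \<noteq> {}" using Zset_ne[OF r] by auto
    fix z' :: "(real^'n) \<times> real" assume z': "z' \<in> Zset r"
    obtain x' y' where zz: "z' = (x', y')" by (cases z')
    have y': "y' = -1 \<or> y' = 1" using z' by (auto simp: Zset_def zz)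
    have "hinge w (x', y') \<le> hinge w (x, y') + norm w * norm (x - x')" by (rule hinge_x_lip[OF y'])
    also have "\<dots> \<le> hinge w (x, y) + (if y \<noteq> y' then lam else 0) + lam * norm (x - x')"
      using hinge_y_diff[OF y' y l2 l0] mult_right_mono[OF l1 norm_ge_zero[of "x - x'"]] by linarith
    also have "\<dots> = hinge w (x, y) + lam * dZ (x, y) z'"
      by (simp add: dZ_def zz algebra_simps)
    finally show "hinge w z' - lam * dZ (x, y) z' \<le> hinge w (x, y)" by (simp add: zz)
  qed
qed

lemma SUP_shift:
  assumes l: "0 \<le> lam"
  shows "(SUP z'\<in>Zset r. hinge w z' - lam * dZ z z' - hinge w z) = SS r w lam z - hinge w z"
proof (rule antisym)
  have ne: "Zset r \<noteq> {}" using Zset_ne[OF r] by auto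
  show "(SUP z'\<in>Zset r. hinge w z' - lam * dZ z z' - hinge w z) \<le> SS r w lam z - hinge w z"
    by (rule cSUP_least[OF ne]) (use SS_ge[OF r Lam w l] in auto)
  have bdd: "bdd_above ((\<lambda>z'. hinge w z' - lam * dZ z z' - hinge w z) ` Zset r)"
  proof (rule bdd_aboveI)
    fix v assume "v \<in> (\<lambda>z'. hinge w z' - lam * dZ z z' - hinge w z) ` Zset r"
    then obtain z' where "z' \<in> Zset r" "v = hinge w z' - lam * dZ z z' - hinge w z" by auto
    then show "v \<le> 1 + Lam * r - hinge w z" using term_le_hi[OF r Lam w _ l, of z' z] by simp
  qed
  have "SS r w lam z \<le> (SUP z'\<in>Zset r. hinge w z' - lam * dZ z z' - hinge w z) + hinge w z"
    unfolding SS_def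
  proof (rule cSUP_least[OF ne])
    fix z' :: "(real^'n) \<times> real" assume "z' \<in> Zset r"
    then have "hinge w z' - lam * dZ z z' - hinge w z \<le> (SUP z'\<in>Zset r. hinge w z' - lam * dZ z z' - hinge w z)"
      by (intro cSUP_upper[OF _ bdd])
    then show "hinge w z' - lam * dZ z z' \<le> (SUP z'\<in>Zset r. hinge w z' - lam * dZ z z' - hinge w z) + hinge w z"
      by linarith
  qed
  then show "SS r w lam z - hinge w z \<le> (SUP z'\<in>Zset r. hinge w z' - lam * dZ z z' - hinge w z)"
    by linarith
qed


lemma psi_eq: "0 \<le> lam \<Longrightarrow> psi r w n zs lam = emp_mean n zs (\<lambda>z. SS r w lam z - hinge w z)"
  unfolding psi_def emp_mean_def using SUP_shift by simp

lemma psi_zero_iff: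
  assumes n: "0 < n" and l: "0 \<le> lam" and zs: "\<forall>i<n. zs i \<in> Zset r"
  shows "psi r w n zs lam = 0 \<longleftrightarrow> good r w n zs lam"
proof -
  have nn: "\<And>i. i \<in> {..<n} \<Longrightarrow> 0 \<le> SS r w lam (zs i) - hinge w (zs i)"
    using SS_ge_hinge[OF r Lam w l] zs by auto
  have "psi r w n zs lam = 0 \<longleftrightarrow> (\<Sum>i<n. SS r w lam (zs i) - hinge w (zs i)) = 0"
    using n by (simp add: psi_eq[OF l] emp_mean_def)
  also have "\<dots> \<longleftrightarrow> (\<forall>i\<in>{..<n}. SS r w lam (zs i) - hinge w (zs i) = 0)"
    by (rule sum_nonneg_eq_0_iff[OF finite_lessThan nn])
  finally show ?thesis unfolding good_def by auto
qed


lemma lmax_nonneg: "0 \<le> (lmax r Lam)" using Lam unfolding lmax_def by auto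

lemma good_lmax: "\<forall>i<n. zs i \<in> Zset r \<Longrightarrow> good r w n zs (lmax r Lam)"
  unfolding good_def
proof (intro allI impI)
  fix i assume a: "\<forall>i<n. zs i \<in> Zset r" "i < n"
  obtain x y where zi: "zs i = (x, y)" by (cases "zs i")
  have zz: "(x, y) \<in> Zset r" using a zi by auto
  have "\<bar>y * (w \<bullet> x)\<bar> \<le> Lam * r" using hinge_bounds(3)[OF zz w r] by simp
  then have 2: "2 * y * (w \<bullet> x) \<le> (lmax r Lam)" unfolding lmax_def by (auto simp: abs_le_iff)
  have "norm w \<le> (lmax r Lam)" using w unfolding lmax_def by auto
  from this 2 show "SS r w (lmax r Lam) (zs i) = hinge w (zs i)" unfolding zi by (rule SS_eq_hinge[OF zz])
qed

lemma good_mono: "0 \<le> lam \<Longrightarrow> lam \<le> lam' \<Longrightarrow> \<forall>i<n. zs i \<in> Zset r \<Longrightarrow> good r w n zs lam \<Longrightarrow> good r w n zs lam'"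
  unfolding good_def
proof (intro allI impI)
  fix i assume a: "0 \<le> lam" "lam \<le> lam'" "\<forall>i<n. zs i \<in> Zset r" "\<forall>i<n. SS r w lam (zs i) = hinge w (zs i)" "i < n"
  have "SS r w lam' (zs i) \<le> SS r w lam (zs i)" by (rule SS_mono[OF r Lam w a(1,2)])
  moreover have "hinge w (zs i) \<le> SS r w lam' (zs i)" using a by (intro SS_ge_hinge[OF r Lam w]) auto
  ultimately show "SS r w lam' (zs i) = hinge w (zs i)" using a by auto
qed

context
  fixes n :: nat and zs :: "nat \<Rightarrow> (real^'n) \<times> real"
  assumes n: "0 < n" and zs: "\<forall>i<n. zs i \<in> Zset r"
begin

lemma Lset_ne: "(lmax r Lam) \<in> {lam. 0 \<le> lam \<and> psi r w n zs lam = 0}"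
  using psi_zero_iff[OF n lmax_nonneg zs] good_lmax[OF zs] lmax_nonneg by auto

lemma lp_le: "0 \<le> lam \<Longrightarrow> good r w n zs lam \<Longrightarrow> lam_plus r w n zs \<le> lam"
  unfolding lam_plus_def
  by (rule cInf_lower) (auto simp: psi_zero_iff[OF n _ zs] bdd_below_def)

lemma lp_nonneg: "0 \<le> lam_plus r w n zs"
  unfolding lam_plus_def by (rule cInf_greatest) (use Lset_ne in auto)

lemma lp_le_lmax: "lam_plus r w n zs \<le> (lmax r Lam)"
  by (rule lp_le[OF lmax_nonneg good_lmax[OF zs]])

lemma lp_less_good: "lam_plus r w n zs < lam \<Longrightarrow> good r w n zs lam"
proof -
  assume a: "lam_plus r w n zs < lam"
  obtain l1 where l1: "l1 \<in> {lam. 0 \<le> lam \<and> psi r w n zs lam = 0}" "l1 < lam"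
    using cInf_lessD[of "{lam. 0 \<le> lam \<and> psi r w n zs lam = 0}" lam] a Lset_ne
    unfolding lam_plus_def by blast
  then have "good r w n zs l1" using psi_zero_iff[OF n _ zs] by auto
  then show ?thesis using good_mono[of l1 lam n zs] l1 zs by auto
qed

lemma lp_le_Max:
  "lam_plus r w n zs \<le> Max ({2 * snd (zs i) * (w \<bullet> fst (zs i)) | i. i < n} \<union> {norm w})"
proof -
  let ?S = "{2 * snd (zs i) * (w \<bullet> fst (zs i)) | i. i < n} \<union> {norm w}"
  have fin: "finite ?S" by auto
  have g: "good r w n zs (Max ?S)"
    unfolding good_def
  proof (intro allI impI)
    fix i assume i: "i < n"
    obtain x y where zi: "zs i = (x, y)" by (cases "zs i")
    have zz: "(x, y) \<in> Zset r" using zs i zi by auto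
    have "2 * y * (w \<bullet> x) \<in> ?S" using i zi by (metis (mono_tags, lifting) UnI1 fst_conv mem_Collect_eq snd_conv)
    then have 2: "2 * y * (w \<bullet> x) \<le> Max ?S" by (intro Max_ge[OF fin])
    have "norm w \<le> Max ?S" by (intro Max_ge[OF fin]) auto
    from this 2 show "SS r w (Max ?S) (zs i) = hinge w (zs i)" unfolding zi by (rule SS_eq_hinge[OF zz])
  qed
  have "norm w \<le> Max ?S" by (intro Max_ge[OF fin]) auto
  then have "0 \<le> Max ?S" using norm_ge_zero[of w] by linarith
  then show ?thesis using lp_le g by blast
qed

end

end



context
  fixes P :: "'a measure" and n :: nat
  assumes P: "prob_space P" and n: "0 < n"
begin

lemma comp_meas: "i \<in> {..<n} \<Longrightarrow> (\<lambda>zs. zs i) \<in> measurable (PiM {..<n} (\<lambda>_. P)) P"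
  using measurable_component_singleton[of i "{..<n}" "\<lambda>_. P"] by simp

lemma ps_P: "product_sigma_finite (\<lambda>_. P)"
  using product_prob_spaceI[of "\<lambda>_. P"] P unfolding product_prob_space_def by auto

lemma prob_mu: "prob_space (PiM {..<n} (\<lambda>_. P))"
  by (rule prob_space_PiM) (rule P)

lemma measure_PiE_pow:
  assumes Q: "Q \<in> sets P"
  shows "measure (PiM {..<n} (\<lambda>_. P)) (PiE {..<n} (\<lambda>_. Q)) = measure P Q ^ n"
proof -
  have "emeasure (PiM {..<n} (\<lambda>_. P)) (PiE {..<n} (\<lambda>_. Q)) = (\<Prod>i<n. emeasure P Q)"
    by (rule product_sigma_finite.emeasure_PiM[OF ps_P]) (use Q in auto)
  also have "\<dots> = ennreal (measure P Q) ^ n"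
    using finite_measure.emeasure_eq_measure[OF prob_space.finite_measure[OF P]] by simp
  also have "\<dots> = ennreal (measure P Q ^ n)" by (simp add: ennreal_power)
  finally show ?thesis unfolding measure_def by simp
qed

lemma indep_components:
  "prob_space.indep_vars (PiM {..<n} (\<lambda>_. P)) (\<lambda>_. P) (\<lambda>i zs. zs i) {..<n}"
proof -
  interpret M: prob_space "PiM {..<n} (\<lambda>_. P)" by (rule prob_mu)
  have ne: "{..<n} \<noteq> {}" using n by auto
  show ?thesis
  proof (subst M.indep_vars_iff_distr_eq_PiM'[OF ne comp_meas])
    have "distr (PiM {..<n} (\<lambda>_. P)) (PiM {..<n} (\<lambda>_. P)) (\<lambda>x. \<lambda>i\<in>{..<n}. x i)
        = distr (PiM {..<n} (\<lambda>_. P)) (PiM {..<n} (\<lambda>_. P)) (\<lambda>x. x)"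
      by (rule distr_cong) (auto simp: space_PiM PiE_restrict)
    also have "\<dots> = PiM {..<n} (\<lambda>_. P)" by (rule distr_id)
    also have "\<dots> = PiM {..<n} (\<lambda>i. distr (PiM {..<n} (\<lambda>_. P)) P (\<lambda>zs. zs i))"
      by (rule PiM_cong) (auto simp: distr_PiM_component[OF P])
    finally show "distr (PiM {..<n} (\<lambda>_. P)) (PiM {..<n} (\<lambda>_. P)) (\<lambda>x. \<lambda>i\<in>{..<n}. x i)
        = PiM {..<n} (\<lambda>i. distr (PiM {..<n} (\<lambda>_. P)) P (\<lambda>zs. zs i))" .
  qed
qed

lemma hoeff:
  fixes h :: "'a \<Rightarrow> real"
  assumes h: "h \<in> borel_measurable P" and hb: "\<And>z. a \<le> h z \<and> h z \<le> b" and ab: "a < b" and t: "0 \<le> t"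
  shows "measure (PiM {..<n} (\<lambda>_. P)) {zs \<in> space (PiM {..<n} (\<lambda>_. P)). emp_mean n zs h \<le> (\<integral>z. h z \<partial>P) - t}
     \<le> exp (- 2 * real n * t\<^sup>2 / (b - a)\<^sup>2)"
proof -
  let ?M = "PiM {..<n} (\<lambda>_. P)"
  interpret M: prob_space ?M by (rule prob_mu)
  define X where "X = (\<lambda>i (zs :: nat \<Rightarrow> 'a). h (zs i))"
  define Y where "Y = X 0"
  have n0: "0 \<in> {..<n}" using n by auto
  have rvX: "X i \<in> borel_measurable ?M" if "i \<in> {..<n}" for i
    unfolding X_def using measurable_compose[OF comp_meas[OF that] h] .
  have distrX: "distr ?M borel (X i) = distr P borel h" if "i \<in> {..<n}" for i
  proof -
    have "distr ?M borel (X i) = distr (distr ?M P (\<lambda>zs. zs i)) borel h"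
      unfolding X_def by (subst distr_distr) (auto simp: comp_def h comp_meas[OF that])
    also have "\<dots> = distr P borel h" by (simp add: distr_PiM_component[OF P that])
    finally show ?thesis .
  qed
  have EY: "M.expectation Y = (\<integral>z. h z \<partial>P)"
  proof -
    have "(\<integral>z. h z \<partial>P) = (\<integral>z. h z \<partial>(distr ?M P (\<lambda>zs. zs 0)))"
      by (simp add: distr_PiM_component[OF P n0])
    also have "\<dots> = M.expectation Y"
      unfolding Y_def X_def by (rule integral_distr[OF comp_meas[OF n0] h])
    finally show ?thesis by simp
  qed
  interpret H: Hoeffding_ineq_iid ?M "{..<n}" X Y a b "M.expectation Y"
  proof unfold_locales
    show "finite {..<n}" by simp
    show "M.indep_vars (\<lambda>_. borel) X {..<n}"
      unfolding X_def by (rule M.indep_vars_compose2[OF indep_components]) (use h in simp)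
    show "distr ?M borel (X i) = distr ?M borel Y" if "i \<in> {..<n}" for i
      unfolding Y_def using distrX[OF that] distrX[OF n0] by simp
    show "Y \<in> borel_measurable ?M" unfolding Y_def by (rule rvX[OF n0])
    show "AE x in ?M. Y x \<in> {a..b}" unfolding Y_def X_def using hb by auto
  qed simp
  have "M.prob {x \<in> space ?M. (\<Sum>i\<in>{..<n}. X i x) / real (card {..<n}) \<le> M.expectation Y - t}
      \<le> exp (- 2 * real (card {..<n}) * t\<^sup>2 / (b - a)\<^sup>2)"
    by (rule H.Hoeffding_ineq_le'[OF t ab]) (use n in auto)
  then show ?thesis unfolding EY by (simp add: emp_mean_def X_def)
qed

end



lemma arith1:
  fixes L K sn :: real
  assumes L: "0 < L" and K: "0 \<le> K" "K \<le> L + 2" and sn: "0 < sn"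
  shows "sqrt ((L + ln 2 + ln (K + 1)) / (2 * sn\<^sup>2)) + 1 / sn \<le> sqrt (L / (2 * sn\<^sup>2)) + 72 / sn"
proof -
  have s3: "sqrt (L + 3) \<le> sqrt L + 2"
  proof -
    have "L + 3 \<le> (sqrt L + 2)\<^sup>2" using L by (simp add: power2_eq_square algebra_simps)
    then have "sqrt (L + 3) \<le> sqrt ((sqrt L + 2)\<^sup>2)" by (rule real_sqrt_le_mono)
    moreover have "0 \<le> sqrt L + 2" using L by simp
    ultimately show ?thesis by simp
  qed
  have "ln (K + 1) \<le> ln (L + 3)" using K L by simp
  also have "ln (L + 3) = 2 * ln (sqrt (L + 3))" using L by (simp add: ln_sqrt)
  also have "\<dots> \<le> 2 * (sqrt (L + 3) - 1)" using ln_le_minus_one[of "sqrt (L + 3)"] L by simp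
  also have "\<dots> \<le> 2 * sqrt L + 2" using s3 by simp
  finally have lK: "ln (K + 1) \<le> 2 * sqrt L + 2" .
  have l2: "ln (2::real) \<le> 1" using ln_le_minus_one[of 2] by simp
  have X: "L + ln 2 + ln (K + 1) \<le> (sqrt L + 100)\<^sup>2"
  proof -
    have sq: "0 \<le> sqrt L" using L by simp
    have "(sqrt L + 100)\<^sup>2 = L + 200 * sqrt L + 10000" using L by (simp add: power2_eq_square algebra_simps)
    then show ?thesis using lK l2 sq by linarith
  qed
  have X0: "0 \<le> L + ln 2 + ln (K + 1)" using L K by simp
  have sX: "sqrt (L + ln 2 + ln (K + 1)) \<le> sqrt L + 100"
  proof -
    have "0 \<le> sqrt L + 100" using L by simp
    then show ?thesis using real_sqrt_le_mono[OF X] by simp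
  qed
  have s2: "100 / sqrt 2 \<le> (71::real)"
  proof -
    have "(100::real) \<le> 71 * sqrt 2"
    proof -
      have "(100::real)\<^sup>2 \<le> (71 * sqrt 2)\<^sup>2" by (simp add: power_mult_distrib)
      then show ?thesis by (rule power2_le_imp_le) simp
    qed
    then show ?thesis by (simp add: field_simps)
  qed
  have e: "sqrt (x / (2 * sn\<^sup>2)) = sqrt x / (sqrt 2 * sn)" for x
    using sn by (simp add: real_sqrt_divide real_sqrt_mult)
  have "sqrt (L + ln 2 + ln (K + 1)) / (sqrt 2 * sn) \<le> (sqrt L + 100) / (sqrt 2 * sn)"
    using sX sn by (intro divide_right_mono) auto
  also have "\<dots> = sqrt L / (sqrt 2 * sn) + (100 / sqrt 2) / sn" by (simp add: add_divide_distrib)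
  also have "\<dots> \<le> sqrt L / (sqrt 2 * sn) + 71 / sn" using s2 sn by (intro add_left_mono divide_right_mono) auto
  finally have F: "sqrt (L + ln 2 + ln (K + 1)) / (sqrt 2 * sn) \<le> sqrt L / (sqrt 2 * sn) + 71 / sn" .
  have "(72::real) / sn = 71 / sn + 1 / sn" using sn by (simp add: field_simps)
  then show ?thesis unfolding e using F by linarith
qed




lemma Zset_closed: "closed (Zset r)"
  unfolding Zset_def by (intro closed_Times closed_cball finite_imp_closed) simp

definition lo :: "real \<Rightarrow> real \<Rightarrow> real" where "lo r Lam = max 0 (1 - Lam * r)"
definition hi :: "real \<Rightarrow> real \<Rightarrow> real" where "hi r Lam = 1 + Lam * r"

context
  fixes r Lam :: real and w :: "real^'n" and P :: "((real^'n) \<times> real) measure" and B :: "(real^'n) set"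
  assumes r: "0 < r" and Lam: "0 < Lam" and w: "norm w \<le> Lam"
    and P: "prob_space P" and sP: "sets P = sets borel" and PZ: "measure P (Zset r) = 1"
    and Bne: "B \<noteq> {}" and Bbd: "bounded B" and Nne: "\<forall>x\<in>cball 0 r. Nbhd r B x \<noteq> {}"
begin

definition Sc :: "real \<Rightarrow> (real^'n) \<times> real \<Rightarrow> real" where "Sc lam z = max (lo r Lam) (SS r w lam z)"
definition mm :: "real \<Rightarrow> real" where "mm lam = (\<integral>z. Sc lam z \<partial>P)"

lemma Z_sets: "Zset r \<in> sets P" using sP borel_closed[OF Zset_closed] by simp
lemma spaceP: "space P = UNIV" using sets_eq_imp_space_eq[OF sP] by simp
lemma AE_Z: "AE z in P. z \<in> Zset r" using prob_space.AE_in_set_eq_1[OF P Z_sets] PZ by simp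

lemma lo_hi: "(lo r Lam) \<le> (hi r Lam)" "0 \<le> (lo r Lam)" "(hi r Lam) - (lo r Lam) \<le> 2 * Lam * r" "(hi r Lam) - (lo r Lam) \<le> 1 + Lam * r" "0 < (hi r Lam) - (lo r Lam)"
  unfolding lo_def hi_def using r Lam by (auto simp: max_def)

lemma hinge_lo_hi: "z \<in> Zset r \<Longrightarrow> (lo r Lam) \<le> hinge w z \<and> hinge w z \<le> (hi r Lam)"
  using hinge_bounds(1,2)[OF _ w r, of z] unfolding lo_def hi_def by auto

lemma Sc_bounds: "0 \<le> lam \<Longrightarrow> (lo r Lam) \<le> Sc lam z \<and> Sc lam z \<le> (hi r Lam)"
  using SS_le_hi[OF r Lam w, of lam z] lo_hi(1) unfolding Sc_def hi_def by auto

lemma Sc_Z: "0 \<le> lam \<Longrightarrow> z \<in> Zset r \<Longrightarrow> Sc lam z = SS r w lam z"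
  using SS_ge_hinge[OF r Lam w, of lam z] hinge_lo_hi[of z] unfolding Sc_def by auto

lemma Sc_meas: "0 \<le> lam \<Longrightarrow> Sc lam \<in> borel_measurable P"
proof -
  assume l: "0 \<le> lam"
  have e: "measurable P borel = measurable borel (borel :: real measure)"
    by (rule measurable_cong_sets[OF sP refl])
  have "SS r w lam \<in> borel_measurable P" unfolding e by (rule SS_measurable[OF r Lam w l])
  then show ?thesis unfolding Sc_def by (intro borel_measurable_max) auto
qed

lemma Sc_int: "0 \<le> lam \<Longrightarrow> integrable P (Sc lam)"
proof -
  assume l: "0 \<le> lam"
  interpret P: prob_space P by (rule P)
  show ?thesis
  proof (rule P.integrable_const_bound[of _ "hi r Lam"])
    show "AE x in P. norm (Sc lam x) \<le> (hi r Lam)"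
    proof (rule AE_I2)
      fix x
      have "(lo r Lam) \<le> Sc lam x \<and> Sc lam x \<le> (hi r Lam)" by (rule Sc_bounds[OF l])
      then show "norm (Sc lam x) \<le> (hi r Lam)" using lo_hi(2) by auto
    qed
  qed (rule Sc_meas[OF l])
qed

lemma Sc_mono: "0 \<le> l \<Longrightarrow> l \<le> l' \<Longrightarrow> Sc l' z \<le> Sc l z"
  using SS_mono[OF r Lam w, of l l' z] unfolding Sc_def by auto

lemma mm_mono: "0 \<le> l \<Longrightarrow> l \<le> l' \<Longrightarrow> mm l' \<le> mm l"
  unfolding mm_def by (intro integral_mono Sc_int Sc_mono) auto

lemma mm_lip: "0 \<le> l \<Longrightarrow> l \<le> l' \<Longrightarrow> mm l \<le> mm l' + (l' - l) * (2 * r + 1)"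
proof -
  assume l: "0 \<le> l" "l \<le> l'"
  interpret P: prob_space P by (rule P)
  have l': "0 \<le> l'" using l by linarith
  have "mm l \<le> (\<integral>z. Sc l' z + (l' - l) * (2 * r + 1) \<partial>P)"
    unfolding mm_def
  proof (rule integral_mono_AE)
    show "integrable P (Sc l)" by (rule Sc_int[OF l(1)])
    show "integrable P (\<lambda>z. Sc l' z + (l' - l) * (2 * r + 1))"
      by (intro Bochner_Integration.integrable_add Sc_int[OF l'] P.integrable_const)
    show "AE z in P. Sc l z \<le> Sc l' z + (l' - l) * (2 * r + 1)"
      using AE_Z
    proof eventually_elim
      case (elim z)
      then show ?case using SS_lip_lam[OF r Lam w elim l] Sc_Z[OF l(1) elim] Sc_Z[OF l' elim] by simp
    qed
  qed
  also have "\<dots> = mm l' + (l' - l) * (2 * r + 1)"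
    unfolding mm_def using Sc_int[OF l'] by (simp add: P.prob_space)
  finally show ?thesis .
qed

lemma mm_dist: "0 \<le> x \<Longrightarrow> 0 \<le> y \<Longrightarrow> dist (mm x) (mm y) \<le> (2 * r + 1) * dist x y"
proof -
  assume a: "0 \<le> x" "0 \<le> y"
  have *: "dist (mm a) (mm b) \<le> (2 * r + 1) * dist a b" if "0 \<le> a" "a \<le> b" for a b
    using mm_mono[OF that] mm_lip[OF that] that by (simp add: dist_real_def abs_le_iff algebra_simps)
  show ?thesis
  proof (cases "x \<le> y")
    case True then show ?thesis using *[OF a(1) True] by simp
  next
    case False then show ?thesis using *[OF a(2), of x] by (simp add: dist_commute)
  qed
qed

lemma mm_cont: "continuous_on {0..L} mm"
  by (rule lipschitz_on_continuous_on[of "2 * r + 1"], rule lipschitz_onI) (use r mm_dist in auto)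

lemma epsB_ge: "v \<in> B \<Longrightarrow> norm v \<le> epsB B"
  unfolding epsB_def
  by (rule cSUP_upper) (use Bbd in \<open>auto simp: bounded_iff bdd_above_def\<close>)

lemma epsB_nonneg: "0 \<le> epsB B"
  using Bne epsB_ge norm_ge_zero by (meson ex_in_conv order_trans)

lemma adv_le: "0 \<le> lam \<Longrightarrow> adv_risk P r B w \<le> lam * epsB B + mm lam"
proof -
  assume l: "0 \<le> lam"
  interpret P: prob_space P by (rule P)
  let ?I = "\<lambda>z. SUP x'\<in>Nbhd r B (fst z). hinge w (x', snd z)"
  have pt: "?I z \<le> lam * epsB B + Sc lam z" if z: "z \<in> Zset r" for z
  proof -
    obtain x y where zz: "z = (x, y)" by (cases z)
    have x: "x \<in> cball 0 r" and y: "y = -1 \<or> y = 1" using z by (auto simp: zz Zset_def)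
    show ?thesis unfolding zz fst_conv snd_conv
    proof (rule cSUP_least)
      show "Nbhd r B x \<noteq> {}" using Nne x by auto
      fix x' assume x': "x' \<in> Nbhd r B x"
      then have x'c: "x' \<in> cball 0 r" and xB: "x' - x \<in> B" by (auto simp: Nbhd_def)
      have z': "(x', y) \<in> Zset r" using x'c y by (auto simp: Zset_def)
      have "hinge w (x', y) - lam * dZ (x, y) (x', y) \<le> SS r w lam (x, y)"
        by (rule SS_ge[OF r Lam w l z'])
      moreover have "dZ (x, y) (x', y) = norm (x' - x)" by (simp add: dZ_def norm_minus_commute)
      moreover have "lam * dZ (x, y) (x', y) = lam * norm (x' - x)" by (simp add: dZ_def norm_minus_commute)
      moreover have "lam * norm (x' - x) \<le> lam * epsB B" using epsB_ge[OF xB] l by (rule mult_left_mono)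
      moreover have "Sc lam (x, y) = SS r w lam (x, y)" using Sc_Z[OF l] z zz by simp
      ultimately show "hinge w (x', y) \<le> lam * epsB B + Sc lam (x, y)" by linarith
    qed
  qed
  show ?thesis
  proof (cases "integrable P ?I")
    case True
    have "adv_risk P r B w \<le> (\<integral>z. lam * epsB B + Sc lam z \<partial>P)"
      unfolding adv_risk_def
    proof (rule integral_mono_AE[OF True])
      show "integrable P (\<lambda>z. lam * epsB B + Sc lam z)"
        by (intro Bochner_Integration.integrable_add Sc_int[OF l] P.integrable_const)
      show "AE z in P. ?I z \<le> lam * epsB B + Sc lam z" using AE_Z by eventually_elim (rule pt)
    qed
    also have "\<dots> = lam * epsB B + mm lam"
      unfolding mm_def using Sc_int[OF l] by (simp add: P.prob_space)
    finally show ?thesis .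
  next
    case False
    then have "adv_risk P r B w = 0" unfolding adv_risk_def by (rule not_integrable_integral_eq)
    moreover have "0 \<le> mm lam" unfolding mm_def
    proof (intro integral_nonneg_AE AE_I2)
      fix x
      have "(lo r Lam) \<le> Sc lam x" using Sc_bounds[OF l] by blast
      then show "0 \<le> Sc lam x" using lo_hi(2) by linarith
    qed
    moreover have "0 \<le> lam * epsB B" using l epsB_nonneg by simp
    ultimately show ?thesis by linarith
  qed
qed


lemma SS_lmax: "z \<in> Zset r \<Longrightarrow> SS r w (lmax r Lam) z = hinge w z"
proof -
  assume z: "z \<in> Zset r"
  obtain x y where zz: "z = (x, y)" by (cases z)
  have "\<bar>y * (w \<bullet> x)\<bar> \<le> Lam * r" using hinge_bounds(3)[OF z w r] by (simp add: zz)
  then have 2: "2 * y * (w \<bullet> x) \<le> lmax r Lam" unfolding lmax_def by (auto simp: abs_le_iff)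
  have "norm w \<le> lmax r Lam" using w unfolding lmax_def by auto
  from this 2 show ?thesis unfolding zz by (rule SS_eq_hinge[OF r Lam w z[unfolded zz]])
qed

lemma lmax_nn: "0 \<le> lmax r Lam" unfolding lmax_def using Lam by auto

lemma hinge_meas: "hinge w \<in> borel_measurable P"
proof -
  have e: "measurable P borel = measurable borel (borel :: real measure)"
    by (rule measurable_cong_sets[OF sP refl])
  have h: "hinge w = (\<lambda>z. max 0 (1 - snd z * (w \<bullet> fst z)))" by (rule ext) (simp add: hinge_def)
  have "continuous_on UNIV (\<lambda>z::(real^'n)\<times>real. max 0 (1 - snd z * (w \<bullet> fst z)))"
    by (intro continuous_intros)
  then show ?thesis unfolding e h by (rule borel_measurable_continuous_onI)
qed

lemma tail:
  assumes l: "0 \<le> lam"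
  shows "{z \<in> Zset r. SS r w lam z = hinge w z} \<in> sets P"
    and "mm lam - mm (lmax r Lam) \<le> ((hi r Lam) - (lo r Lam)) * (1 - measure P {z \<in> Zset r. SS r w lam z = hinge w z})"
proof -
  interpret P: prob_space P by (rule P)
  let ?Q = "{z \<in> Zset r. SS r w lam z = hinge w z}"
  have e: "measurable P borel = measurable borel (borel :: real measure)"
    by (rule measurable_cong_sets[OF sP refl])
  have SSm: "SS r w lam \<in> borel_measurable P" unfolding e by (rule SS_measurable[OF r Lam w l])
  have "{z \<in> space P. SS r w lam z = hinge w z} \<in> sets P"
    by (rule borel_measurable_eq[OF SSm hinge_meas])
  then have "Zset r \<inter> {z \<in> space P. SS r w lam z = hinge w z} \<in> sets P"
    using Z_sets by blast
  moreover have "Zset r \<inter> {z \<in> space P. SS r w lam z = hinge w z} = ?Q" using spaceP by auto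
  ultimately show Q: "?Q \<in> sets P" by simp
  have "mm lam - mm (lmax r Lam) = (\<integral>z. Sc lam z - Sc (lmax r Lam) z \<partial>P)"
    unfolding mm_def using Sc_int[OF l] Sc_int[OF lmax_nn] by simp
  also have "\<dots> \<le> (\<integral>z. ((hi r Lam) - (lo r Lam)) * indicator (UNIV - ?Q) z \<partial>P)"
  proof (rule integral_mono_AE)
    show "integrable P (\<lambda>z. Sc lam z - Sc (lmax r Lam) z)"
      using Sc_int[OF l] Sc_int[OF lmax_nn] by simp
    have "space P - ?Q \<in> sets P" by (rule sets.compl_sets[OF Q])
    then have "UNIV - ?Q \<in> sets P" using spaceP by simp
    then show "integrable P (\<lambda>z. ((hi r Lam) - (lo r Lam)) * indicator (UNIV - ?Q) z)"
      by (intro integrable_mult_right integrable_real_indicator) (auto simp: P.emeasure_eq_measure)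
    show "AE z in P. Sc lam z - Sc (lmax r Lam) z \<le> ((hi r Lam) - (lo r Lam)) * indicator (UNIV - ?Q) z"
      using AE_Z
    proof eventually_elim
      case (elim z)
      have a: "Sc (lmax r Lam) z = hinge w z" using Sc_Z[OF lmax_nn elim] SS_lmax[OF elim] by simp
      show ?case
      proof (cases "z \<in> ?Q")
        case True
        then show ?thesis using a Sc_Z[OF l elim] by simp
      next
        case False
        then show ?thesis using Sc_bounds[OF l, of z] Sc_bounds[OF lmax_nn, of z] by simp
      qed
    qed
  qed
  also have "\<dots> = ((hi r Lam) - (lo r Lam)) * measure P (UNIV - ?Q)" by (simp add: spaceP)
  also have "measure P (UNIV - ?Q) = 1 - measure P ?Q"
    using P.prob_compl[OF Q] spaceP by simp
  finally show "mm lam - mm (lmax r Lam) \<le> ((hi r Lam) - (lo r Lam)) * (1 - measure P ?Q)" .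
qed

lemma adv_le_hi: "adv_risk P r B w \<le> (hi r Lam)"
proof -
  interpret P: prob_space P by (rule P)
  let ?I = "\<lambda>z. SUP x'\<in>Nbhd r B (fst z). hinge w (x', snd z)"
  have pt: "?I z \<le> (hi r Lam)" if z: "z \<in> Zset r" for z
  proof -
    obtain x y where zz: "z = (x, y)" by (cases z)
    have x: "x \<in> cball 0 r" and y: "y = -1 \<or> y = 1" using z by (auto simp: zz Zset_def)
    show ?thesis unfolding zz fst_conv snd_conv
    proof (rule cSUP_least)
      show "Nbhd r B x \<noteq> {}" using Nne x by auto
      fix x' assume x': "x' \<in> Nbhd r B x"
      then have "(x', y) \<in> Zset r" using y by (auto simp: Zset_def Nbhd_def)
      then show "hinge w (x', y) \<le> (hi r Lam)" using hinge_lo_hi by blast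
    qed
  qed
  show ?thesis
  proof (cases "integrable P ?I")
    case True
    have "adv_risk P r B w \<le> (\<integral>z. (hi r Lam) \<partial>P)"
      unfolding adv_risk_def
      by (rule integral_mono_AE[OF True P.integrable_const]) (use AE_Z pt in auto)
    then show ?thesis by (simp add: P.prob_space)
  next
    case False
    then have "adv_risk P r B w = 0" unfolding adv_risk_def by (rule not_integrable_integral_eq)
    then show ?thesis using lo_hi by linarith
  qed
qed

lemma emp_hinge_ge: "0 < n \<Longrightarrow> \<forall>i<n. zs i \<in> Zset r \<Longrightarrow> (lo r Lam) \<le> emp_mean n zs (hinge w)"
proof -
  assume n: "0 < n" and zs: "\<forall>i<n. zs i \<in> Zset r"
  have "(\<Sum>i<n. (lo r Lam)) \<le> (\<Sum>i<n. hinge w (zs i))" using zs hinge_lo_hi by (intro sum_mono) auto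
  then show ?thesis using n unfolding emp_mean_def by (simp add: field_simps)
qed

lemma good_emp: "0 \<le> lam \<Longrightarrow> \<forall>i<n. zs i \<in> Zset r \<Longrightarrow> good r w n zs lam \<Longrightarrow>
    emp_mean n zs (Sc lam) = emp_mean n zs (hinge w)"
proof -
  assume l: "0 \<le> lam" and zs: "\<forall>i<n. zs i \<in> Zset r" and g: "good r w n zs lam"
  have "Sc lam (zs i) = hinge w (zs i)" if "i < n" for i
  proof -
    have "SS r w lam (zs i) = hinge w (zs i)" using g that unfolding good_def by auto
    then show ?thesis using Sc_Z[OF l] zs that by auto
  qed
  then show ?thesis unfolding emp_mean_def by simp
qed


lemma main_prob:
  assumes n: "0 < n" and d0: "0 < \<delta>" and d1: "\<delta> < 1"
  shows "\<exists>A\<in>sets (PiM {..<n} (\<lambda>_. P)). 1 - \<delta> \<le> measure (PiM {..<n} (\<lambda>_. P)) A \<and>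
     (\<forall>zs\<in>A. (\<forall>i<n. zs i \<in> Zset r) \<and> adv_risk P r B w \<le> emp_mean n zs (hinge w) + lam_plus r w n zs * epsB B
        + (hi r Lam - lo r Lam) * (sqrt (ln (1 / \<delta>) / (2 * real n)) + 72 / sqrt (real n)))"
proof -
  interpret P: prob_space P by (rule P)
  let ?M = "PiM {..<n} (\<lambda>_. P)"
  interpret M: prob_space ?M by (rule prob_mu[OF P n])
  define E0 :: "(nat \<Rightarrow> (real^'n) \<times> real) set" where "E0 = PiE {..<n} (\<lambda>_. Zset r)"
  have E0s: "E0 \<in> sets ?M" unfolding E0_def by (rule sets_PiM_I_finite) (auto simp: Z_sets)
  have E0m: "measure ?M E0 = 1" unfolding E0_def using measure_PiE_pow[OF P n Z_sets] PZ by simp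
  have E0z: "\<forall>i<n. zs i \<in> Zset r" if "zs \<in> E0" for zs using that unfolding E0_def by auto
  have E0sp: "E0 \<subseteq> space ?M" unfolding E0_def space_PiM spaceP by auto
  define L where "L = ln (1 / \<delta>)"
  have L0: "0 < L" unfolding L_def using d0 d1 by (intro ln_gt_zero) (simp add: field_simps)
  have eL: "exp (- L) = \<delta>" unfolding L_def using d0 by (simp add: ln_div)
  define R where "R = hi r Lam - lo r Lam"
  have R0: "0 < R" using lo_hi(5) unfolding R_def .
  define sn where "sn = sqrt (real n)"
  have sn0: "0 < sn" using n unfolding sn_def by simp
  have sn1: "1 \<le> sn" using n unfolding sn_def by simp
  have sn2: "real n = sn\<^sup>2" unfolding sn_def by simp
  define a where "a = sqrt (L / (2 * real n))"
  have goal_form: "sqrt (ln (1 / \<delta>) / (2 * real n)) + 72 / sqrt (real n) = a + 72 / sn"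
    unfolding a_def L_def sn_def ..
  show ?thesis
  proof (cases "1 \<le> a + 72 / sn")
    case True
    show ?thesis
    proof (intro bexI conjI ballI)
      show "E0 \<in> sets ?M" by (rule E0s)
      show "1 - \<delta> \<le> measure ?M E0" using E0m d0 by simp
      fix zs assume zs: "zs \<in> E0"
      show "\<forall>i<n. zs i \<in> Zset r" by (rule E0z[OF zs])
      have "adv_risk P r B w \<le> hi r Lam" by (rule adv_le_hi)
      moreover have "lo r Lam \<le> emp_mean n zs (hinge w)" by (rule emp_hinge_ge[OF n E0z[OF zs]])
      moreover have "0 \<le> lam_plus r w n zs * epsB B"
        using lp_nonneg[OF r Lam w n E0z[OF zs]] epsB_nonneg by simp
      moreover have "R * 1 \<le> R * (a + 72 / sn)" using True R0 by (intro mult_left_mono) auto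
      moreover have "R = hi r Lam - lo r Lam" by (rule R_def)
      ultimately have "adv_risk P r B w \<le> emp_mean n zs (hinge w) + R * (a + 72 / sn)" by linarith
      then have "adv_risk P r B w \<le> emp_mean n zs (hinge w) + lam_plus r w n zs * epsB B + R * (a + 72 / sn)"
        using \<open>0 \<le> lam_plus r w n zs * epsB B\<close> by linarith
      then show "adv_risk P r B w \<le> emp_mean n zs (hinge w) + lam_plus r w n zs * epsB B + (hi r Lam - lo r Lam) * (sqrt (ln (1 / \<delta>) / (2 * real n)) + 72 / sqrt (real n))"
        by (simp only: goal_form R_def)
    qed
  next
    case False
    define lm where "lm = lmax r Lam"
    have lm0: "0 \<le> lm" unfolding lm_def by (rule lmax_nn)
    define mi where "mi = mm lm"
    define eps where "eps = R / sn"
    have eps0: "0 < eps" unfolding eps_def using R0 sn0 by simp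
    define K where "K = nat \<lceil>(L + ln 2) / sn\<rceil>"
    have K1: "(L + ln 2) / sn \<le> real K" unfolding K_def by (rule real_nat_ceiling_ge)
    have Lln: "0 \<le> L + ln 2" using L0 by simp
    have K2: "real K \<le> L + 2"
    proof -
      have "real K = of_int \<lceil>(L + ln 2) / sn\<rceil>" unfolding K_def using Lln sn0 by simp
      also have "\<dots> \<le> (L + ln 2) / sn + 1" by simp
      finally have k: "real K \<le> (L + ln 2) / sn + 1" .
      have "(L + ln 2) / sn \<le> L + ln 2" using Lln sn1 by (simp add: divide_le_eq mult_le_cancel_left1)
      then show ?thesis using k ln_le_minus_one[of 2] by simp
    qed
    define c where "c j = mi + real j * eps" for j :: nat
    have ivt: "\<exists>l. 0 \<le> l \<and> l \<le> lm \<and> mm l = y" if "mi \<le> y" "y \<le> mm 0" for y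
      using IVT2'[of mm lm y 0] that lm0 mm_cont[of lm] unfolding mi_def by auto
    define lj where "lj j = (if j = K then lm else if c j \<le> mm 0 then (SOME l. 0 \<le> l \<and> l \<le> lm \<and> mm l = c j) else lm)" for j
    have cge: "mi \<le> c j" for j unfolding c_def using eps0 by simp
    have lj_c: "0 \<le> lj j \<and> lj j \<le> lm \<and> mm (lj j) = c j" if "j \<noteq> K" "c j \<le> mm 0" for j
      using someI_ex[OF ivt[OF cge that(2)]] that unfolding lj_def by simp
    have lj0: "0 \<le> lj j" for j using lj_c[of j] lm0 unfolding lj_def by (cases "j = K"; cases "c j \<le> mm 0") auto
    define ls where "ls = (SOME l. 0 \<le> l \<and> l \<le> lm \<and> mm l = c K)"
    have ls_c: "0 \<le> ls \<and> ls \<le> lm \<and> mm ls = c K" if "c K \<le> mm 0"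
      using someI_ex[OF ivt[OF cge that]] unfolding ls_def by simp
    define Q where "Q = {z \<in> Zset r. SS r w ls z = hinge w z}"
    define Bad1 where "Bad1 = (if c K \<le> mm 0 then PiE {..<n} (\<lambda>_. Q) else {})"
    define L2 where "L2 = L + ln 2 + ln (real K + 1)"
    have L2_0: "0 \<le> L2" unfolding L2_def using L0 by simp
    define dev where "dev = R * sqrt (L2 / (2 * real n))"
    have dev0: "0 \<le> dev" unfolding dev_def using R0 L2_0 by simp
    define Bad2 where "Bad2 j = {zs \<in> space ?M. emp_mean n zs (Sc (lj j)) \<le> mm (lj j) - dev}" for j
    define A where "A = E0 - Bad1 - (\<Union>j\<in>{..K}. Bad2 j)"
    have Bad1s: "Bad1 \<in> sets ?M"
    proof (cases "c K \<le> mm 0")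
      case True
      have "Q \<in> sets P" unfolding Q_def by (rule tail(1)) (use ls_c[OF True] in auto)
      then have "PiE {..<n} (\<lambda>_. Q) \<in> sets ?M" by (intro sets_PiM_I_finite) auto
      then show ?thesis unfolding Bad1_def using True by simp
    next
      case False then show ?thesis unfolding Bad1_def by simp
    qed
    have emp_meas: "(\<lambda>zs. emp_mean n zs h) \<in> borel_measurable ?M" if h: "h \<in> borel_measurable P" for h
    proof -
      have "(\<lambda>zs. h (zs i)) \<in> borel_measurable ?M" if "i \<in> {..<n}" for i
        by (rule measurable_compose[OF comp_meas[OF P n that] h])
      then have "(\<lambda>zs. \<Sum>i<n. h (zs i)) \<in> borel_measurable ?M" by (rule borel_measurable_sum)
      then show ?thesis unfolding emp_mean_def by (rule borel_measurable_divide) simp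
    qed
    have Bad2s: "Bad2 j \<in> sets ?M" for j
      unfolding Bad2_def by (rule borel_measurable_le[OF emp_meas[OF Sc_meas[OF lj0]]]) simp
    have UBs: "(\<Union>j\<in>{..K}. Bad2 j) \<in> sets ?M" using Bad2s by (intro sets.finite_UN) auto
    have As: "A \<in> sets ?M" unfolding A_def using E0s Bad1s UBs by auto
    have hB2: "measure ?M (Bad2 j) \<le> \<delta> / (2 * (real K + 1))" for j
    proof -
      have "measure ?M (Bad2 j) \<le> exp (- 2 * real n * dev\<^sup>2 / (hi r Lam - lo r Lam)\<^sup>2)"
        unfolding Bad2_def mm_def
        by (rule hoeff[OF P n Sc_meas[OF lj0] Sc_bounds[OF lj0] _ dev0]) (use lo_hi(5) in simp)
      also have "- 2 * real n * dev\<^sup>2 / (hi r Lam - lo r Lam)\<^sup>2 = - L2"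
        unfolding dev_def R_def[symmetric] using R0 n L2_0 by (simp add: power_mult_distrib field_simps)
      also have "exp (- L2) = exp (- L) * exp (- ln 2) * exp (- ln (real K + 1))"
        unfolding L2_def by (simp add: exp_add[symmetric])
      also have "\<dots> = \<delta> * inverse 2 * inverse (real K + 1)" using eL by (simp add: exp_minus)
      also have "\<dots> = \<delta> / (2 * (real K + 1))" by (simp add: field_simps)
      finally show ?thesis .
    qed
    have hB1: "measure ?M Bad1 \<le> \<delta> / 2"
    proof (cases "c K \<le> mm 0")
      case True
      note lsc = ls_c[OF True]
      have Qs: "Q \<in> sets P" unfolding Q_def by (rule tail(1)) (use lsc in auto)
      have "mm ls - mm lm \<le> R * (1 - measure P Q)"
        unfolding Q_def R_def lm_def by (rule tail(2)) (use lsc in auto)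
      moreover have "mm ls - mm lm = real K * R / sn" using lsc unfolding c_def mi_def eps_def by simp
      ultimately have "real K * R / sn \<le> R * (1 - measure P Q)" by simp
      then have "R * (real K / sn) \<le> R * (1 - measure P Q)" by (simp add: mult.commute)
      then have "real K / sn \<le> 1 - measure P Q" using R0 by (rule mult_left_le_imp_le)
      then have PQ: "measure P Q \<le> 1 - real K / sn" by linarith
      have PQ0: "0 \<le> measure P Q" by simp
      have "measure ?M Bad1 = measure P Q ^ n" unfolding Bad1_def using True measure_PiE_pow[OF P n Qs] by simp
      also have "\<dots> \<le> (1 - real K / sn) ^ n" by (rule power_mono[OF PQ PQ0])
      also have "\<dots> \<le> exp (- (real K / sn)) ^ n"
      proof (rule power_mono)
        show "0 \<le> 1 - real K / sn" using PQ PQ0 by linarith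
        show "1 - real K / sn \<le> exp (- (real K / sn))" using exp_ge_add_one_self[of "- (real K / sn)"] by simp
      qed
      also have "\<dots> = exp (real n * (- (real K / sn)))" by (rule exp_of_nat_mult[symmetric])
      also have "real n * (- (real K / sn)) = - (real K * sn)" using sn0 unfolding sn2 by (simp add: power2_eq_square)
      also have "exp (- (real K * sn)) \<le> exp (- (L + ln 2))"
      proof -
        have "L + ln 2 \<le> real K * sn" using K1 sn0 by (simp add: divide_le_eq)
        then show ?thesis by simp
      qed
      also have "exp (- (L + ln 2)) = exp (- L) * exp (- ln 2)" by (simp add: exp_add[symmetric])
      also have "\<dots> = \<delta> / 2" using eL by (simp add: exp_minus field_simps)
      finally show ?thesis .
    next
      case False then show ?thesis unfolding Bad1_def using d0 by simp
    qed
    have mA: "1 - \<delta> \<le> measure ?M A"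
    proof -
      have "E0 \<subseteq> A \<union> (Bad1 \<union> (\<Union>j\<in>{..K}. Bad2 j))" unfolding A_def by auto
      then have "measure ?M E0 \<le> measure ?M (A \<union> (Bad1 \<union> (\<Union>j\<in>{..K}. Bad2 j)))"
        using As Bad1s UBs by (intro M.finite_measure_mono) auto
      also have "\<dots> \<le> measure ?M A + measure ?M (Bad1 \<union> (\<Union>j\<in>{..K}. Bad2 j))"
        using As Bad1s UBs by (intro measure_Un_le) auto
      also have "measure ?M (Bad1 \<union> (\<Union>j\<in>{..K}. Bad2 j)) \<le> measure ?M Bad1 + measure ?M (\<Union>j\<in>{..K}. Bad2 j)"
        using Bad1s UBs by (intro measure_Un_le) auto
      also have "measure ?M (\<Union>j\<in>{..K}. Bad2 j) \<le> (\<Sum>j\<in>{..K}. measure ?M (Bad2 j))"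
        by (rule measure_UNION_le) (use Bad2s in auto)
      also have "\<dots> \<le> (\<Sum>j\<in>{..K}. \<delta> / (2 * (real K + 1)))" by (rule sum_mono) (rule hB2)
      also have "\<dots> = \<delta> / 2" using d0 by (simp add: field_simps)
      finally show ?thesis using E0m hB1 by linarith
    qed
    show ?thesis
    proof (intro bexI conjI ballI)
      show "A \<in> sets ?M" by (rule As)
      show "1 - \<delta> \<le> measure ?M A" by (rule mA)
      fix zs assume zsA: "zs \<in> A"
      have zsE: "zs \<in> E0" using zsA unfolding A_def by auto
      have zsZ: "\<forall>i<n. zs i \<in> Zset r" by (rule E0z[OF zsE])
      then show "\<forall>i<n. zs i \<in> Zset r" .
      have zsS: "zs \<in> space ?M" using zsE E0sp by auto
      have nB1: "zs \<notin> Bad1" using zsA unfolding A_def by auto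
      have nB2: "mm (lj j) < emp_mean n zs (Sc (lj j)) + dev" if "j \<le> K" for j
      proof -
        have "zs \<notin> Bad2 j" using zsA that unfolding A_def by auto
        then have "\<not> emp_mean n zs (Sc (lj j)) \<le> mm (lj j) - dev" using zsS unfolding Bad2_def by auto
        then show ?thesis by linarith
      qed
      define lp where "lp = lam_plus r w n zs"
      have lp0: "0 \<le> lp" unfolding lp_def by (rule lp_nonneg[OF r Lam w n zsZ])
      have lp1: "lp \<le> lm" unfolding lp_def lm_def by (rule lp_le_lmax[OF r Lam w n zsZ])
      have good_lt: "good r w n zs l" if "lp < l" for l
        using lp_less_good[OF r Lam w n zsZ] that unfolding lp_def by blast
      have adv: "adv_risk P r B w \<le> lp * epsB B + mm lp" by (rule adv_le[OF lp0])
      have mi_le: "mi \<le> mm lp" unfolding mi_def by (rule mm_mono[OF lp0 lp1])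
      have le_cK: "mm lp \<le> c K"
      proof (cases "c K \<le> mm 0")
        case True
        note lsc = ls_c[OF True]
        have "ls \<le> lp"
        proof (rule ccontr)
          assume "\<not> ls \<le> lp"
          then have g: "good r w n zs ls" using good_lt by simp
          have "zs \<in> PiE {..<n} (\<lambda>_. Q)"
          proof -
            have "zs i \<in> Q" if "i < n" for i
              using g zsZ that unfolding good_def Q_def by auto
            moreover have "zs i = undefined" if "i \<notin> {..<n}" for i
              using zsE that unfolding E0_def by (auto simp: PiE_def extensional_def)
            ultimately show ?thesis by (auto simp: PiE_def extensional_def)
          qed
          then show False using nB1 True unfolding Bad1_def by simp
        qed
        then have "mm lp \<le> mm ls" by (rule mm_mono[OF lsc[THEN conjunct1]])
        then show ?thesis using lsc by simp
      next
        case False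
        have "mm lp \<le> mm 0" by (rule mm_mono[OF _ lp0]) simp
        then show ?thesis using False by simp
      qed
      have key: "mm lp \<le> emp_mean n zs (hinge w) + dev + eps"
      proof (cases "mm lp = mi")
        case True
        have g: "good r w n zs lm" unfolding lm_def by (rule good_lmax[OF r Lam w zsZ])
        have "mm (lj K) < emp_mean n zs (Sc (lj K)) + dev" by (rule nB2) simp
        moreover have "lj K = lm" unfolding lj_def by simp
        moreover have "emp_mean n zs (Sc lm) = emp_mean n zs (hinge w)" by (rule good_emp[OF lm0 zsZ g])
        ultimately show ?thesis using True eps0 unfolding mi_def by simp
      next
        case False
        then have gt: "mi < mm lp" using mi_le by simp
        define x where "x = (mm lp - mi) / eps"
        have x0: "0 < x" unfolding x_def using gt eps0 by simp
        have xK: "x \<le> real K" unfolding x_def using le_cK eps0 unfolding c_def by (simp add: divide_le_eq)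
        define k where "k = \<lceil>x\<rceil>"
        have k1: "1 \<le> k" unfolding k_def using x0 by simp
        have kK: "k \<le> int K" unfolding k_def using xK by (intro ceiling_le) simp
        have klt: "of_int k - 1 < x" unfolding k_def using ceiling_less_iff[of x "\<lceil>x\<rceil>"] by simp
        have kge: "x \<le> of_int k" unfolding k_def by simp
        define j where "j = nat (k - 1)"
        have jr: "real j = of_int k - 1" unfolding j_def using k1 by simp
        have jK: "j \<noteq> K" using jr kK by linarith
        have jK': "j \<le> K" using jr kK by linarith
        have cj_lt: "c j < mm lp"
        proof -
          have "real j * eps < x * eps" using jr klt eps0 by simp
          then show ?thesis unfolding c_def x_def using eps0 by simp
        qed
        have lp_cj: "mm lp \<le> c j + eps"
        proof -
          have "x * eps \<le> (real j + 1) * eps" using jr kge eps0 by (intro mult_right_mono) auto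
          moreover have "x * eps = mm lp - mi" unfolding x_def using eps0 by simp
          moreover have "(real j + 1) * eps = real j * eps + eps" by (simp add: algebra_simps)
          ultimately show ?thesis unfolding c_def by linarith
        qed
        have cj0: "c j \<le> mm 0"
        proof -
          have "mm lp \<le> mm 0" by (rule mm_mono[OF _ lp0]) simp
          then show ?thesis using cj_lt by simp
        qed
        note ljc = lj_c[OF jK cj0]
        have "lp < lj j"
        proof (rule ccontr)
          assume "\<not> lp < lj j"
          then have "mm lp \<le> mm (lj j)" using ljc by (intro mm_mono) auto
          then show False using ljc cj_lt by simp
        qed
        then have g: "good r w n zs (lj j)" by (rule good_lt)
        have "emp_mean n zs (Sc (lj j)) = emp_mean n zs (hinge w)" by (rule good_emp[OF lj0 zsZ g])
        then have "c j < emp_mean n zs (hinge w) + dev" using nB2[OF jK'] ljc by simp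
        then show ?thesis using lp_cj by simp
      qed
      have arith: "dev + eps \<le> R * (a + 72 / sn)"
      proof -
        have "sqrt (L2 / (2 * sn\<^sup>2)) + 1 / sn \<le> sqrt (L / (2 * sn\<^sup>2)) + 72 / sn"
          unfolding L2_def by (rule arith1[OF L0 _ K2 sn0]) simp
        then have "R * (sqrt (L2 / (2 * sn\<^sup>2)) + 1 / sn) \<le> R * (sqrt (L / (2 * sn\<^sup>2)) + 72 / sn)"
          using R0 by (intro mult_left_mono) auto
        then show ?thesis unfolding dev_def eps_def a_def sn2 by (simp add: algebra_simps)
      qed
      have "adv_risk P r B w \<le> emp_mean n zs (hinge w) + lam_plus r w n zs * epsB B + R * (a + 72 / sn)"
        using adv key arith unfolding lp_def by linarith
      then show "adv_risk P r B w \<le> emp_mean n zs (hinge w) + lam_plus r w n zs * epsB B + (hi r Lam - lo r Lam) * (sqrt (ln (1 / \<delta>) / (2 * real n)) + 72 / sqrt (real n))"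
        by (simp only: goal_form R_def)
    qed
  qed
qed

end



lemma lam_minus_bounds:
  assumes "0 \<le> lam_plus r w n zs"
  shows "0 \<le> lam_minus r B w n zs \<and> lam_minus r B w n zs \<le> lam_plus r w n zs"
proof -
  let ?S = "{lam. 0 \<le> lam \<and> lam \<le> lam_plus r w n zs \<and> psi r w n zs lam = lam_plus r w n zs * epsB B}"
  show ?thesis
  proof (cases "?S = {}")
    case True then show ?thesis using assms by (simp add: lam_minus_def)
  next
    case False
    then obtain l where l: "l \<in> ?S" by blast
    have bdd: "bdd_above ?S" by (rule bdd_aboveI[of _ "lam_plus r w n zs"]) auto
    have "l \<le> Sup ?S" by (rule cSup_upper[OF l bdd])
    moreover have "Sup ?S \<le> lam_plus r w n zs" by (rule cSup_least[OF False]) auto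
    ultimately show ?thesis using l False by (simp add: lam_minus_def Let_def)
  qed
qed

lemma Lambda_eps_nonneg:
  fixes B :: "(real^'n) set"
  assumes r: "0 < r" and Lam: "0 < Lam" and n: "0 < n" and e: "0 \<le> epsB B"
  shows "0 \<le> Lambda_eps r Lam B n"
proof -
  let ?O = "{(w, zs). norm (w::real^'n) \<le> Lam \<and> (\<forall>i<n. zs i \<in> Zset r)}"
  let ?hi = "\<lambda>p. zeta_hi r Lam B (fst p) n (snd p)"
  let ?lo = "\<lambda>p. zeta_lo r Lam B (fst p) n (snd p)"
  have facts: "0 \<le> ?lo p \<and> ?lo p \<le> ?hi p \<and> ?hi p \<le> max ((1 + Lam * r) / epsB B) (lmax r Lam)"
    if p: "p \<in> ?O" for p
  proof -
    obtain w zs where pp: "p = (w, zs)" by (cases p)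
    have w: "norm w \<le> Lam" and zs: "\<forall>i<n. zs i \<in> Zset r" using p pp by auto
    have lp0: "0 \<le> lam_plus r w n zs" by (rule lp_nonneg[OF r Lam w n zs])
    have lp1: "lam_plus r w n zs \<le> lmax r Lam" by (rule lp_le_lmax[OF r Lam w n zs])
    have lm: "0 \<le> lam_minus r B w n zs \<and> lam_minus r B w n zs \<le> lam_plus r w n zs"
      by (rule lam_minus_bounds[OF lp0])
    have M: "0 \<le> (1 + Lam * r) / epsB B" using e r Lam by simp
    show ?thesis unfolding pp fst_conv snd_conv zeta_hi_def zeta_lo_def
      using lp0 lp1 lm M by auto
  qed
  have p0: "(0::real^'n, \<lambda>_. (0, 1)) \<in> ?O" using Zset_ne[OF r] Lam by auto
  have bddb: "bdd_below (?lo ` ?O)" by (rule bdd_belowI[of _ 0]) (use facts in auto)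
  have bdda: "bdd_above (?hi ` ?O)"
    by (rule bdd_aboveI[of _ "max ((1 + Lam * r) / epsB B) (lmax r Lam)"]) (use facts in auto)
  have "(INF p\<in>?O. ?lo p) \<le> ?lo (0::real^'n, \<lambda>_. (0, 1))" by (rule cINF_lower[OF bddb p0])
  also have "\<dots> \<le> ?hi (0::real^'n, \<lambda>_. (0, 1))" using facts[OF p0] by blast
  also have "\<dots> \<le> (SUP p\<in>?O. ?hi p)" by (rule cSUP_upper[OF p0 bdda])
  finally show ?thesis unfolding Lambda_eps_def by simp
qed


theorem corollary2:
  fixes P :: "((real^'n) \<times> real) measure"
    and B :: "(real^'n) set" and w :: "real^'n"
    and r Lam \<delta> :: real and n :: nat
  assumes "0 < r" and "0 < Lam"
    and "prob_space P" and "sets P = sets borel" and "measure P (Zset r) = 1"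
    and "B \<noteq> {}" and "closed B" and "convex B" and "bounded B"
    and "\<forall>v\<in>B. - v \<in> B"
    and "\<forall>x\<in>cball 0 r. Nbhd r B x \<noteq> {}"
    and "norm w \<le> Lam"
    and "0 < \<delta>" and "\<delta> < 1" and "0 < n"
  shows "(\<exists>A\<in>sets (PiM {..<n} (\<lambda>_. P)).
            1 - \<delta> \<le> measure (PiM {..<n} (\<lambda>_. P)) A \<and>
            (\<forall>zs\<in>A.
               adv_risk P r B w
               \<le> emp_mean n zs (hinge w)
                 + lam_plus r w n zs * epsB B
                 + 144 / sqrt (real n) * Lam * r * sqrt (real CARD('n))
                 + 12 * sqrt pi / sqrt (real n) * Lambda_eps r Lam B n * (2 * r + 1)
                 + (1 + Lam * r) * sqrt (ln (1 / \<delta>) / (2 * real n))))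
         \<and> (\<forall>zs. (\<forall>i<n. zs i \<in> Zset r) \<longrightarrow>
               lam_plus r w n zs
               \<le> Max ({2 * snd (zs i) * (w \<bullet> fst (zs i)) | i. i < n} \<union> {norm w}))"
proof -
  note r = assms(1) and Lam = assms(2) and P = assms(3) and sP = assms(4) and PZ = assms(5)
    and Bne = assms(6) and Bbd = assms(9) and Nne = assms(11) and w = assms(12)
    and d0 = assms(13) and d1 = assms(14) and n = assms(15)
  obtain A where As: "A \<in> sets (PiM {..<n} (\<lambda>_. P))" and Am: "1 - \<delta> \<le> measure (PiM {..<n} (\<lambda>_. P)) A"
    and Ab: "\<forall>zs\<in>A. (\<forall>i<n. zs i \<in> Zset r) \<and> adv_risk P r B w \<le> emp_mean n zs (hinge w) + lam_plus r w n zs * epsB B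
        + (hi r Lam - lo r Lam) * (sqrt (ln (1 / \<delta>) / (2 * real n)) + 72 / sqrt (real n))"
    using main_prob[OF r Lam w P sP PZ Bne Bbd Nne n d0 d1] by blast
  have lh: "hi r Lam - lo r Lam \<le> 2 * Lam * r" "hi r Lam - lo r Lam \<le> 1 + Lam * r" "0 < hi r Lam - lo r Lam"
    using lo_hi[OF r Lam w P sP PZ Bne Bbd Nne] by auto
  have e0: "0 \<le> epsB B" by (rule epsB_nonneg[OF r Lam w P sP PZ Bne Bbd Nne])
  have Le: "0 \<le> Lambda_eps r Lam B n" by (rule Lambda_eps_nonneg[OF r Lam n e0])
  define S where "S = sqrt (ln (1 / \<delta>) / (2 * real n))"
  define sn where "sn = sqrt (real n)"
  have "0 \<le> ln (1 / \<delta>)" using d0 d1 by (intro ln_ge_zero) simp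
  then have "0 \<le> ln (1 / \<delta>) / (2 * real n)" by simp
  then have S0: "0 \<le> S" unfolding S_def by simp
  have sn0: "0 < sn" unfolding sn_def using n by simp
  have d1': "1 \<le> sqrt (real CARD('n))" by simp
  have t1: "(hi r Lam - lo r Lam) * S \<le> (1 + Lam * r) * S" using lh S0 by (intro mult_right_mono) auto
  have t2: "(hi r Lam - lo r Lam) * (72 / sn) \<le> 144 / sn * Lam * r * sqrt (real CARD('n))"
  proof -
    have "(hi r Lam - lo r Lam) * 72 \<le> (2 * Lam * r) * 72" using lh by (intro mult_right_mono) auto
    also have "\<dots> = 144 * Lam * r" by simp
    finally have "(hi r Lam - lo r Lam) * 72 \<le> 144 * Lam * r" .
    also have "144 * Lam * r \<le> 144 * Lam * r * sqrt (real CARD('n))"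
      using mult_left_mono[OF d1', of "144 * Lam * r"] r Lam by simp
    finally have "(hi r Lam - lo r Lam) * 72 / sn \<le> 144 * Lam * r * sqrt (real CARD('n)) / sn"
      using sn0 by (intro divide_right_mono) auto
    then show ?thesis by (simp add: field_simps)
  qed
  have t3: "0 \<le> 12 * sqrt pi / sqrt (real n) * Lambda_eps r Lam B n * (2 * r + 1)"
    using Le r by simp
  show ?thesis
  proof (intro conjI allI impI)
    show "\<exists>A\<in>sets (PiM {..<n} (\<lambda>_. P)).
            1 - \<delta> \<le> measure (PiM {..<n} (\<lambda>_. P)) A \<and>
            (\<forall>zs\<in>A.
               adv_risk P r B w
               \<le> emp_mean n zs (hinge w)
                 + lam_plus r w n zs * epsB B
                 + 144 / sqrt (real n) * Lam * r * sqrt (real CARD('n))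
                 + 12 * sqrt pi / sqrt (real n) * Lambda_eps r Lam B n * (2 * r + 1)
                 + (1 + Lam * r) * sqrt (ln (1 / \<delta>) / (2 * real n)))"
    proof (intro bexI[OF _ As] conjI ballI)
      show "1 - \<delta> \<le> measure (PiM {..<n} (\<lambda>_. P)) A" by (rule Am)
      fix zs assume "zs \<in> A"
      then have b: "adv_risk P r B w \<le> emp_mean n zs (hinge w) + lam_plus r w n zs * epsB B
        + (hi r Lam - lo r Lam) * (S + 72 / sn)" using Ab unfolding S_def sn_def by blast
      have "(hi r Lam - lo r Lam) * (S + 72 / sn) = (hi r Lam - lo r Lam) * S + (hi r Lam - lo r Lam) * (72 / sn)"
        by (simp add: distrib_left)
      then show "adv_risk P r B w
               \<le> emp_mean n zs (hinge w)
                 + lam_plus r w n zs * epsB B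
                 + 144 / sqrt (real n) * Lam * r * sqrt (real CARD('n))
                 + 12 * sqrt pi / sqrt (real n) * Lambda_eps r Lam B n * (2 * r + 1)
                 + (1 + Lam * r) * sqrt (ln (1 / \<delta>) / (2 * real n))"
        using b t1 t2 t3 unfolding S_def sn_def by linarith
    qed
  next
    fix zs :: "nat \<Rightarrow> (real^'n) \<times> real"
    assume "\<forall>i<n. zs i \<in> Zset r"
    then show "lam_plus r w n zs \<le> Max ({2 * snd (zs i) * (w \<bullet> fst (zs i)) | i. i < n} \<union> {norm w})"
      by (rule lp_le_Max[OF r Lam w n])
  qed
qed

end
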